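(* Let $\alpha=(\alpha_1,\dots,\alpha_t)\in\mathcal{P}(n)$ with $\delta(\alpha)=\big(1,2,\dots,q-1,q,q^{(s_q)},(q-1)^{(s_{q-1})},\dots,1^{(s_1)}\big)$, where $q\ge1$ and $s_1,\dots,s_q\ge0$. Then \[\alpha_1\in A_1=\Big\{q,\ q+s_q,\ q+s_q+s_{q-1},\ \dots,\ q+\sum_{i=1}^q s_i\Big\}.\] Equivalently, $\alpha\in\mathcal{P}(n,k)^*$ for some $k\in A_1$.
   Context: A partition of a positive integer $n$ is a finite non-increasing sequence $\alpha=(\alpha_1,\dots,\alpha_t)$ of positive integers with sum $n$; $\mathcal{P}(n)$ is the set of partitions of $n$, and $\alpha_i=0$ for $i>t$. The diagonal sequence is $\delta(\alpha)=(d_k)_{k\ge1}$ with $d_k=|\{i:1\le i\le k,\ \alpha_i+i-1\ge k\}|$, trailing zeros omitted; $j^{(s)}$ denotes $s$ consecutive entries equal to $j$. $\mathcal{P}(n,k)^*$ denotes the set of partitions of $n$ whose largest part equals $k$. *)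

theory Defs
  imports Main
begin

definition partitions :: "nat \<Rightarrow> nat list set" where
  "partitions n = {xs. sorted_wrt (\<ge>) xs \<and> (\<forall>x\<in>set xs. 0 < x) \<and> sum_list xs = n}"

text \<open>1-indexed parts, with alpha_i = 0 for i > t.\<close>
definition part :: "nat list \<Rightarrow> nat \<Rightarrow> nat" where
  "part xs i = (if 1 \<le> i \<and> i \<le> length xs then xs ! (i - 1) else 0)"

definition diag_entry :: "nat list \<Rightarrow> nat \<Rightarrow> nat" where
  "diag_entry xs k = card {i. 1 \<le> i \<and> i \<le> k \<and> part xs i + i - 1 \<ge> k}"

text \<open>Diagonal sequence (d_1, d_2, ...) with trailing zeros omitted; d_k = 0 for
  k > sum_list xs + length xs, so truncating there loses nothing.\<close>
definition diag_seq :: "nat list \<Rightarrow> nat list" where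
  "diag_seq xs = rev (dropWhile (\<lambda>x. x = 0)
      (rev (map (diag_entry xs) [1..<sum_list xs + length xs + 1])))"

end

theory Submission
  imports Defs
begin

definition blk :: "(nat \<Rightarrow> nat) \<Rightarrow> nat \<Rightarrow> nat list" where
  "blk s m = concat (map (\<lambda>j. replicate (s j) j) (rev [1..<m+1]))"

lemma blk_Suc: "blk s (Suc m) = replicate (s (Suc m)) (Suc m) @ blk s m"
  by (simp add: blk_def)

lemma blk_set: "x \<in> set (blk s m) \<Longrightarrow> x \<le> m"
  by (induction m) (auto simp: blk_Suc, auto simp: blk_def)

lemma blk_len: "length (blk s m) = (\<Sum>i\<in>{1..m}. s i)"
  by (induction m) (auto simp: blk_Suc, simp add: blk_def)

lemma blk_end:
  assumes "i < length (blk s m)"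
    and "Suc i = length (blk s m) \<or> blk s m ! Suc i \<noteq> blk s m ! i"
  shows "\<exists>j. 1 \<le> j \<and> j \<le> m \<and> Suc i = (\<Sum>l\<in>{j..m}. s l)"
  using assms
proof (induction m arbitrary: i)
  case 0
  then show ?case by (simp add: blk_def)
next
  case (Suc m)
  show ?case
  proof (cases "i < s (Suc m)")
    case True
    have "Suc i = s (Suc m)"
    proof (rule ccontr)
      assume "Suc i \<noteq> s (Suc m)"
      hence "Suc i < s (Suc m)" using True by simp
      thus False using Suc.prems by (auto simp: blk_Suc nth_append)
    qed
    thus ?thesis by (intro exI[of _ "Suc m"]) simp
  next
    case False
    define i' where "i' = i - s (Suc m)"
    have ii: "i = s (Suc m) + i'" using False i'_def by simp
    have "i' < length (blk s m)" using Suc.prems(1) by (simp add: blk_Suc ii)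
    moreover have "Suc i' = length (blk s m) \<or> blk s m ! Suc i' \<noteq> blk s m ! i'"
      using Suc.prems(2) by (simp add: blk_Suc ii nth_append)
    ultimately obtain j where j: "1 \<le> j" "j \<le> m" "Suc i' = (\<Sum>l\<in>{j..m}. s l)"
      using Suc.IH by blast
    have "(\<Sum>l\<in>{j..Suc m}. s l) = s (Suc m) + (\<Sum>l\<in>{j..m}. s l)"
      using j by (simp add: sum.cl_ivl_Suc)
    thus ?thesis using j ii by (intro exI[of _ j]) simp
  qed
qed

lemma part_mono:
  assumes "sorted_wrt (\<ge>) xs" "1 \<le> i" "i \<le> j"
  shows "part xs j \<le> part xs i"
proof (cases "j \<le> length xs")
  case True
  show ?thesis
  proof (cases "i = j")
    case False
    hence "i - 1 < j - 1" using assms by simp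
    thus ?thesis using assms True sorted_wrt_nth_less[OF assms(1), of "i - 1" "j - 1"]
      by (simp add: part_def)
  qed simp
next
  case False
  thus ?thesis by (simp add: part_def)
qed

definition SS :: "nat list \<Rightarrow> nat \<Rightarrow> nat set" where
  "SS xs k = {i. 1 \<le> i \<and> i \<le> k \<and> part xs i + i - 1 \<ge> k}"

lemma SS_fin: "finite (SS xs k)"
  by (rule finite_subset[of _ "{1..k}"]) (auto simp: SS_def)

lemma diag_SS: "diag_entry xs k = card (SS xs k)"
  by (simp add: diag_entry_def SS_def)

lemma diag_le:
  assumes "sorted_wrt (\<ge>) xs"
  shows "diag_entry xs k \<le> part xs 1"
proof -
  have "SS xs k \<subseteq> {k + 1 - part xs 1..k}"
  proof
    fix i assume "i \<in> SS xs k"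
    hence "1 \<le> i" "i \<le> k" "part xs i + i - 1 \<ge> k" by (auto simp: SS_def)
    moreover have "part xs i \<le> part xs 1" using part_mono[OF assms, of 1 i] calculation by simp
    ultimately show "i \<in> {k + 1 - part xs 1..k}" by simp
  qed
  hence "card (SS xs k) \<le> card {k + 1 - part xs 1..k}" by (intro card_mono) auto
  also have "\<dots> \<le> part xs 1" by simp
  finally show ?thesis by (simp add: diag_SS)
qed

lemma diag_pos:
  assumes "1 \<le> part xs 1"
  shows "1 \<le> diag_entry xs (part xs 1)"
proof -
  have "1 \<in> SS xs (part xs 1)" using assms by (simp add: SS_def)
  hence "SS xs (part xs 1) \<noteq> {}" by blast
  thus ?thesis using SS_fin by (simp add: diag_SS Suc_le_eq card_gt_0_iff)
qed

lemma diag_step: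
  assumes "sorted_wrt (\<ge>) xs" "k = part xs 1" "1 \<le> k"
  shows "diag_entry xs (Suc k) < diag_entry xs k \<or> diag_entry xs k = k"
proof -
  have sub: "SS xs (Suc k) \<subseteq> Suc ` SS xs k"
  proof
    fix i assume "i \<in> SS xs (Suc k)"
    hence i: "1 \<le> i" "i \<le> Suc k" "part xs i + i - 1 \<ge> Suc k" by (auto simp: SS_def)
    have "i \<noteq> 1" using i assms by auto
    hence "2 \<le> i" using i by simp
    moreover have "part xs i \<le> part xs (i - 1)" using part_mono[OF assms(1), of "i - 1" i] calculation
      by simp
    ultimately have "i - 1 \<in> SS xs k" using i by (simp add: SS_def; linarith)
    thus "i \<in> Suc ` SS xs k" using \<open>2 \<le> i\<close> by (intro image_eqI[of _ _ "i - 1"]) auto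
  qed
  have cs: "card (Suc ` SS xs k) = card (SS xs k)" by (simp add: card_image)
  show ?thesis
  proof (cases "card (SS xs (Suc k)) = card (SS xs k)")
    case False
    have "card (SS xs (Suc k)) \<le> card (SS xs k)"
      using card_mono[OF finite_imageI[OF SS_fin] sub] cs by simp
    thus ?thesis using False by (simp add: diag_SS)
  next
    case True
    hence eq: "SS xs (Suc k) = Suc ` SS xs k"
      using card_subset_eq[OF finite_imageI[OF SS_fin] sub] cs by simp
    have "\<forall>j. 1 \<le> j \<and> j \<le> k \<longrightarrow> j \<in> SS xs k"
    proof (intro allI)
      fix j show "1 \<le> j \<and> j \<le> k \<longrightarrow> j \<in> SS xs k"
      proof (induction j)
        case 0 then show ?case by simp
      next
        case (Suc j)
        show ?case
        proof
          assume a: "1 \<le> Suc j \<and> Suc j \<le> k"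
          show "Suc j \<in> SS xs k"
          proof (cases "j = 0")
            case True thus ?thesis using assms by (simp add: SS_def)
          next
            case False
            hence "j \<in> SS xs k" using Suc.IH a by simp
            hence "Suc j \<in> SS xs (Suc k)" using eq by blast
            hence "k + 1 \<le> part xs (Suc j) + Suc j - 1" unfolding SS_def by simp
            thus ?thesis using a unfolding SS_def by simp
          qed
        qed
      qed
    qed
    hence "{1..k} \<subseteq> SS xs k" by (intro subsetI) simp
    moreover have "SS xs k \<subseteq> {1..k}" unfolding SS_def by (intro subsetI) simp
    ultimately have "SS xs k = {1..k}" by (rule subset_antisym[rotated])
    thus ?thesis by (simp add: diag_SS)
  qed
qed

lemma rev_drop_split:
  "ys = rev (dropWhile P (rev ys)) @ rev (takeWhile P (rev ys))
   \<and> (\<forall>z \<in> set (rev (takeWhile P (rev ys))). P z)"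
proof
  have "rev ys = takeWhile P (rev ys) @ dropWhile P (rev ys)" by simp
  hence "rev (rev ys) = rev (takeWhile P (rev ys) @ dropWhile P (rev ys))" by simp
  thus "ys = rev (dropWhile P (rev ys)) @ rev (takeWhile P (rev ys))" by (metis rev_append rev_rev_ident)
  show "\<forall>z \<in> set (rev (takeWhile P (rev ys))). P z" by (auto dest: set_takeWhileD)
qed

lemma len_rdr: "length (rev (dropWhile P (rev ys))) \<le> length ys"
  using length_dropWhile_le[of P "rev ys"] by simp

lemma diag_nth:
  assumes "1 \<le> j" "j \<le> sum_list xs + length xs"
  shows "diag_entry xs j = (if j \<le> length (diag_seq xs) then diag_seq xs ! (j - 1) else 0)"
proof -
  define M where "M = map (diag_entry xs) [1..<sum_list xs + length xs + 1]"
  define Z where "Z = rev (takeWhile (\<lambda>x. x = 0) (rev M))"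
  have ds: "diag_seq xs = rev (dropWhile (\<lambda>x. x = 0) (rev M))"
    by (simp only: diag_seq_def M_def)
  have sp: "M = diag_seq xs @ Z" and zz: "\<forall>z\<in>set Z. z = 0"
    using rev_drop_split[of M "\<lambda>x. x = 0"] unfolding ds Z_def by blast+
  have "j - 1 < length M" using assms by (simp add: M_def)
  moreover have "M ! (j - 1) = diag_entry xs j" using assms unfolding M_def
    by (subst nth_map) (simp_all del: upt_Suc add: nth_upt)
  ultimately show ?thesis
  proof (cases "j \<le> length (diag_seq xs)")
    case True
    hence "j - 1 < length (diag_seq xs)" using assms by simp
    thus ?thesis using True sp \<open>M ! (j - 1) = diag_entry xs j\<close> by (simp add: nth_append)
  next
    case False
    have lM: "length M = length (diag_seq xs) + length Z" using sp by simp
    have "j - 1 - length (diag_seq xs) < length Z" using False \<open>j - 1 < length M\<close> lM by linarith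
    hence z0: "Z ! (j - 1 - length (diag_seq xs)) = 0" using zz nth_mem by blast
    have nl: "\<not> j - 1 < length (diag_seq xs)" using False by simp
    have "M ! (j - 1) = Z ! (j - 1 - length (diag_seq xs))"
      using nl sp by (simp only: nth_append if_False)
    thus ?thesis using False z0 \<open>M ! (j - 1) = diag_entry xs j\<close> by simp
  qed
qed

theorem proposition2p8:
  fixes n q :: nat and s :: "nat \<Rightarrow> nat" and \<alpha> :: "nat list"
  assumes "0 < n" and "\<alpha> \<in> partitions n" and "1 \<le> q"
    and "diag_seq \<alpha> = [1..<q+1] @ concat (map (\<lambda>j. replicate (s j) j) (rev [1..<q+1]))"
  shows "part \<alpha> 1 \<in> {q + (\<Sum>i\<in>{j..q}. s i) | j. 1 \<le> j \<and> j \<le> q + 1}"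
proof -
  define D where "D = diag_seq \<alpha>"
  define C where "C = blk s q"
  have DC: "D = [1..<q+1] @ C" using assms(4) by (simp add: D_def C_def blk_def)
  have DCn: "\<And>m. D ! (q + m) = C ! m"
  proof -
    fix m
    have "length [1..<q+1] = q" by simp
    thus "D ! (q + m) = C ! m" using nth_append_length_plus[of "[1..<q+1]" C m] DC by metis
  qed
  have DL: "length D = q + length C" using DC by simp
  have sorted: "sorted_wrt (\<ge>) \<alpha>" and pos: "\<forall>x\<in>set \<alpha>. 0 < x" and sm: "sum_list \<alpha> = n"
    using assms(2) by (auto simp: partitions_def)
  have ne: "\<alpha> \<noteq> []" using sm assms(1) by auto
  define k where "k = part \<alpha> 1"
  have k1: "1 \<le> k" using ne pos by (cases \<alpha>) (auto simp: k_def part_def)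
  have kn: "k \<le> n" using ne sm by (cases \<alpha>) (auto simp: k_def part_def)
  define N where "N = sum_list \<alpha> + length \<alpha>"
  have "1 \<le> length \<alpha>" using ne by (cases \<alpha>) auto
  hence kN: "Suc k \<le> N" using kn sm by (simp add: N_def)
  have qN: "q \<le> N"
  proof -
    have "q \<le> length D" using DC by simp
    also have "length D \<le> N"
      unfolding D_def diag_seq_def N_def
      by (rule order.trans[OF len_rdr]) auto
    finally show ?thesis .
  qed
  have dq: "diag_entry \<alpha> q = q"
    using diag_nth[of q \<alpha>] assms(3) qN DC by (simp add: N_def D_def[symmetric] nth_append)
  have qk: "q \<le> k" using diag_le[OF sorted, of q] dq k_def by simp
  show ?thesis
  proof (cases "k = q")
    case True
    thus ?thesis using k_def by (intro CollectI exI[of _ "q+1"]) simp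
  next
    case False
    hence qk': "q < k" using qk by simp
    have kL: "k \<le> length D"
    proof (rule ccontr)
      assume "\<not> k \<le> length D"
      hence "diag_entry \<alpha> k = 0" using diag_nth[of k \<alpha>] k1 kN by (simp add: N_def D_def)
      thus False using diag_pos[of \<alpha>] k1 k_def by simp
    qed
    define i where "i = k - 1 - q"
    have ki: "k = Suc (q + i)" using qk' i_def by simp
    have dk: "diag_entry \<alpha> k = C ! i"
      using diag_nth[of k \<alpha>] k1 kN kL DCn by (simp add: N_def D_def[symmetric] ki)
    have iC: "i < length C" using kL DL ki by simp
    have "C ! i \<le> q" using blk_set[of "C ! i" s q] iC C_def by simp
    hence "diag_entry \<alpha> k \<noteq> k" using dk qk' by simp
    hence lt: "diag_entry \<alpha> (Suc k) < diag_entry \<alpha> k"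
      using diag_step[OF sorted k_def k1] by simp
    have "Suc i = length C \<or> C ! Suc i \<noteq> C ! i"
    proof (rule ccontr)
      assume "\<not> ?thesis"
      hence a: "Suc i < length C" "C ! Suc i = C ! i" using iC by auto
      have "diag_entry \<alpha> (Suc k) = C ! Suc i"
        using diag_nth[of "Suc k" \<alpha>] kN a DCn DL by (simp add: N_def D_def[symmetric] ki)
          (metis add_Suc_right)
      thus False using lt dk a by simp
    qed
    then obtain j where j: "1 \<le> j" "j \<le> q" "Suc i = (\<Sum>l\<in>{j..q}. s l)"
      using blk_end[of i s q] iC C_def by blast
    thus ?thesis using ki k_def by (intro CollectI exI[of _ j]) simp
  qed
qed

end
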